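(* Let $\mathcal U=\{1,\dots,N\}$, $\mathcal P=\{S_1,\dots,S_r\}$ with $S_i\subseteq\mathcal U$ and $\bigcup_i S_i=\mathcal U$, and let $\alpha$ be a positive integer. Define $\bar A\in\{0,*\}^{N\times N}$ with $\bar A_{ii}=*$ and all off-diagonal entries $0$, $\bar B\in\{0,*\}^{N\times1}$ with all entries $*$, and $\bar C\in\{0,*\}^{r\times N}$ with $\bar C_{ij}=*$ iff $j\in S_i$; set $\gamma=\alpha-1$. For $\bar K\in\{0,*\}^{1\times r}$ let $S(\bar K)=\{S_j:\bar K_{1j}=*\}$. Then $\bar K$ is a (feasible) solution to the Sparsest Resilient Feedback Design Problem for $(\bar A,\bar B,\bar C)$ and $\gamma$, i.e. $\bar K\in\mathcal K_\gamma$, if and only if $S(\bar K)$ is a (feasible) solution of the minimum set multi-covering problem $(\mathcal U,\mathcal P,\alpha)$, i.e. every element of $\mathcal U$ lies in at least $\alpha$ sets of $S(\bar K)$.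
   Context: A structured system $(\bar A,\bar B,\bar C)$ has $\bar A\in\{0,*\}^{n\times n}$, $\bar B\in\{0,*\}^{n\times m}$, $\bar C\in\{0,*\}^{p\times n}$; a numerical realization is real $(A,B,C)$ vanishing wherever the structured matrix is $0$. For $\bar K\in\{0,*\}^{m\times p}$, $[\bar K]=\{K\in\mathbb R^{m\times p}:K_{ij}=0\text{ whenever }\bar K_{ij}=0\}$; $(\bar A,\bar B,\bar C,\bar K)$ has no structurally fixed modes (no SFMs) if some realization satisfies $\bigcap_{K\in[\bar K]}\sigma(A+BKC)=\emptyset$. $\bar K^{\mathcal I}$ is $\bar K$ with entries indexed by $\mathcal I$ set to $0$. $\mathcal K_\gamma=\{\bar K:(\bar A,\bar B,\bar C,\bar K^{\mathcal I})\text{ has no SFMs for all }|\mathcal I|\le\gamma\}$. Sparsest Resilient Feedback Design Problem: minimize the number of $*$ entries $\|\bar K\|_0$ over $\bar K\in\mathcal K_\gamma$. Minimum set multi-covering (MSMC) problem $(\mathcal U,\mathcal P,\alpha)$: find a minimum-cardinality subcollection of $\mathcal P$ covering each element of $\mathcal U$ at least $\alpha$ times. *)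

theory Defs
  imports Complex_Main "Jordan_Normal_Form.Char_Poly"
begin

(* Structured matrices: bool mat, True = *, False = 0. *)

definition realizes :: "bool mat \<Rightarrow> real mat \<Rightarrow> bool" where
  "realizes Mb M \<longleftrightarrow> dim_row M = dim_row Mb \<and> dim_col M = dim_col Mb \<and>
     (\<forall>i<dim_row Mb. \<forall>j<dim_col Mb. \<not> Mb $$ (i,j) \<longrightarrow> M $$ (i,j) = 0)"

definition pattern_set :: "bool mat \<Rightarrow> real mat set" where
  "pattern_set Kb = {K. realizes Kb K}"

definition spec :: "real mat \<Rightarrow> complex set" where
  "spec M = {z. eigenvalue (map_mat complex_of_real M) z}"

definition no_SFM :: "bool mat \<Rightarrow> bool mat \<Rightarrow> bool mat \<Rightarrow> bool mat \<Rightarrow> bool" where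
  "no_SFM Ab Bb Cb Kb \<longleftrightarrow>
     (\<exists>A B C. realizes Ab A \<and> realizes Bb B \<and> realizes Cb C \<and>
        (\<Inter>K\<in>pattern_set Kb. spec (A + B * K * C)) = {})"

definition zero_entries :: "bool mat \<Rightarrow> (nat \<times> nat) set \<Rightarrow> bool mat" where
  "zero_entries Kb I = mat (dim_row Kb) (dim_col Kb) (\<lambda>(i,j). Kb $$ (i,j) \<and> (i,j) \<notin> I)"

(* K_gamma for (Ab, Bb, Cb): Ab n x n, Bb n x m, Cb p x n, Kbar m x p *)
definition K_gamma :: "bool mat \<Rightarrow> bool mat \<Rightarrow> bool mat \<Rightarrow> nat \<Rightarrow> bool mat set" where
  "K_gamma Ab Bb Cb \<gamma> = {Kb. Kb \<in> carrier_mat (dim_col Bb) (dim_row Cb) \<and>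
     (\<forall>I. I \<subseteq> {0..<dim_col Bb} \<times> {0..<dim_row Cb} \<and> card I \<le> \<gamma> \<longrightarrow>
          no_SFM Ab Bb Cb (zero_entries Kb I))}"

(* The reduction matrices; U = {0..<N}, sets S 0 .. S (r-1) *)
definition red_A :: "nat \<Rightarrow> bool mat" where
  "red_A N = mat N N (\<lambda>(i,j). i = j)"
definition red_B :: "nat \<Rightarrow> bool mat" where
  "red_B N = mat N 1 (\<lambda>_. True)"
definition red_C :: "nat \<Rightarrow> nat \<Rightarrow> (nat \<Rightarrow> nat set) \<Rightarrow> bool mat" where
  "red_C N r S = mat r N (\<lambda>(i,j). j \<in> S i)"

(* the selected subcollection S(Kbar), counted with index multiplicity, covers
   every element of U at least alpha times *)
definition multi_covers :: "nat \<Rightarrow> nat \<Rightarrow> (nat \<Rightarrow> nat set) \<Rightarrow> nat \<Rightarrow> bool mat \<Rightarrow> bool" where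
  "multi_covers N r S \<alpha> Kb \<longleftrightarrow>
     (\<forall>u<N. card {j. j < r \<and> Kb $$ (0,j) \<and> u \<in> S j} \<ge> \<alpha>)"

end

theory Submission
  imports Defs
begin

lemma BKC_entry:
  fixes B K C :: "'a::comm_ring_1 mat"
  assumes "B \<in> carrier_mat N 1" "K \<in> carrier_mat 1 r" "C \<in> carrier_mat r N" "i < N" "j < N"
  shows "(B * K * C) $$ (i,j) = B $$ (i,0) * (\<Sum>m<r. K $$ (0,m) * C $$ (m,j))"
proof -
  have "(B * K) $$ (i,l) = B $$ (i,0) * K $$ (0,l)" if "l < r" for l
    using assms that by (simp add: scalar_prod_def)
  then show ?thesis using assms
    by (simp add: scalar_prod_def sum_distrib_left lessThan_atLeast0 mult.assoc)
qed

lemma realizes_carrier: "realizes Mb M \<Longrightarrow> Mb \<in> carrier_mat n m \<Longrightarrow> M \<in> carrier_mat n m"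
  unfolding realizes_def by auto

lemma realizes_zero: "realizes Mb M \<Longrightarrow> i < dim_row Mb \<Longrightarrow> j < dim_col Mb \<Longrightarrow> \<not> Mb $$ (i,j) \<Longrightarrow> M $$ (i,j) = 0"
  unfolding realizes_def by auto

lemma redA: "red_A N \<in> carrier_mat N N" "i < N \<Longrightarrow> j < N \<Longrightarrow> red_A N $$ (i,j) = (i = j)"
  unfolding red_A_def by auto
lemma redB: "red_B N \<in> carrier_mat N 1" "i < N \<Longrightarrow> j < 1 \<Longrightarrow> red_B N $$ (i,j)"
  unfolding red_B_def by auto
lemma redC: "red_C N r S \<in> carrier_mat r N" "i < r \<Longrightarrow> j < N \<Longrightarrow> red_C N r S $$ (i,j) = (j \<in> S i)"
  unfolding red_C_def by auto

lemma sfm_easy: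
  assumes Kb: "Kb \<in> carrier_mat 1 r" and u: "u < N"
    and nc: "\<not> (\<exists>j<r. Kb $$ (0,j) \<and> u \<in> S j)"
  shows "\<not> no_SFM (red_A N) (red_B N) (red_C N r S) Kb"
  unfolding no_SFM_def
proof (intro notI, elim exE conjE)
  fix A B C
  assume rA: "realizes (red_A N) A" and rB: "realizes (red_B N) B" and rC: "realizes (red_C N r S) C"
    and e: "(\<Inter>K\<in>pattern_set Kb. spec (A + B * K * C)) = {}"
  have A: "A \<in> carrier_mat N N" using realizes_carrier[OF rA redA(1)] .
  have B: "B \<in> carrier_mat N 1" using realizes_carrier[OF rB redB(1)] .
  have C: "C \<in> carrier_mat r N" using realizes_carrier[OF rC redC(1)] .
  have Aoff: "A $$ (k,u) = 0" if "k < N" "k \<noteq> u" for k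
  proof -
    have d: "dim_row (red_A N) = N" "dim_col (red_A N) = N" using redA(1) by auto
    show ?thesis using realizes_zero[OF rA, of k u] d that u by (auto simp: red_A_def)
  qed
  have "complex_of_real (A $$ (u,u)) \<in> spec (A + B * K * C)" if "K \<in> pattern_set Kb" for K
  proof -
    have rK: "realizes Kb K" using that unfolding pattern_set_def by auto
    have K: "K \<in> carrier_mat 1 r" using realizes_carrier[OF rK Kb] .
    have z: "K $$ (0,m) * C $$ (m,u) = 0" if "m < r" for m
    proof (cases "Kb $$ (0,m)")
      case True
      then have "u \<notin> S m" using nc that by auto
      moreover have "dim_row (red_C N r S) = r" "dim_col (red_C N r S) = N" using redC(1) by auto
      ultimately have "C $$ (m,u) = 0" using realizes_zero[OF rC, of m u] that u by (auto simp: red_C_def)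
      then show ?thesis by simp
    next
      case False
      then show ?thesis using realizes_zero[OF rK] Kb that by auto
    qed
    have col: "(A + B * K * C) $$ (k,u) = (if k = u then A $$ (u,u) else 0)" if "k < N" for k
    proof -
      have "(B * K * C) $$ (k,u) = 0"
        using BKC_entry[OF B K C that u] z by simp
      moreover have "B * K * C \<in> carrier_mat N N" using B K C by auto
      ultimately show ?thesis using A that u Aoff by (auto simp del: index_mult_mat assoc_mult_mat)
    qed
    let ?M = "map_mat complex_of_real (A + B * K * C)"
    have dM: "?M \<in> carrier_mat N N" using A B K C by auto
    have "?M *\<^sub>v unit_vec N u = complex_of_real (A $$ (u,u)) \<cdot>\<^sub>v unit_vec N u"
    proof (rule eq_vecI)
      fix k assume "k < dim_vec (complex_of_real (A $$ (u,u)) \<cdot>\<^sub>v unit_vec N u)"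
      then have k: "k < N" by simp
      have "(?M *\<^sub>v unit_vec N u) $ k = ?M $$ (k,u)"
      proof -
        have "dim_row ?M = N" "dim_col ?M = N" using dM by auto
        then show ?thesis using k u by (simp del: index_map_mat)
      qed
      also have "\<dots> = complex_of_real ((A + B * K * C) $$ (k,u))"
        by (rule index_map_mat(1)) (use dM k u in auto)
      also have "\<dots> = complex_of_real (A $$ (u,u)) * (unit_vec N u $ k)"
        unfolding col[OF k] using k u by auto
      finally show "(?M *\<^sub>v unit_vec N u) $ k = (complex_of_real (A $$ (u,u)) \<cdot>\<^sub>v unit_vec N u) $ k"
        using k by simp
    qed (use dM A B K C in simp)
    then have "eigenvector ?M (unit_vec N u) (complex_of_real (A $$ (u,u)))"
      unfolding eigenvector_def using dM u by auto
    then show ?thesis unfolding spec_def eigenvalue_def by auto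
  qed
  then show False using e by blast
qed

lemma spec_eq:
  assumes M: "M \<in> carrier_mat N N" and l: "l \<in> spec M"
  shows "\<exists>v. v \<in> carrier_vec N \<and> (\<exists>u<N. v $ u \<noteq> 0) \<and>
     (\<forall>k<N. (\<Sum>j<N. complex_of_real (M $$ (k,j)) * v $ j) = l * v $ k)"
proof -
  let ?M = "map_mat complex_of_real M"
  obtain v where v: "v \<in> carrier_vec N" "v \<noteq> 0\<^sub>v N" "?M *\<^sub>v v = l \<cdot>\<^sub>v v"
    using l M unfolding spec_def eigenvalue_def eigenvector_def by auto
  have "\<exists>u<N. v $ u \<noteq> 0"
  proof (rule ccontr)
    assume "\<not> ?thesis"
    then have "v = 0\<^sub>v N" using v(1) by (intro eq_vecI) auto
    then show False using v(2) by simp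
  qed
  moreover have "(\<Sum>j<N. complex_of_real (M $$ (k,j)) * v $ j) = l * v $ k" if k: "k < N" for k
  proof -
    have "(?M *\<^sub>v v) $ k = (l \<cdot>\<^sub>v v) $ k" using v(3) by simp
    then show ?thesis using M v(1) k
      by (simp add: scalar_prod_def lessThan_atLeast0)
  qed
  ultimately show ?thesis using v(1) by blast
qed

definition wA :: "nat \<Rightarrow> real mat" where "wA N = mat N N (\<lambda>(i,j). if i = j then real i else 0)"
definition wB :: "nat \<Rightarrow> real mat" where "wB N = mat N 1 (\<lambda>_. 1)"
definition wC :: "nat \<Rightarrow> nat \<Rightarrow> (nat \<Rightarrow> nat set) \<Rightarrow> real mat" where
  "wC N r S = mat r N (\<lambda>(i,j). if j \<in> S i then 1 else 0)"

lemma wM_entry: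
  assumes K: "K \<in> carrier_mat 1 r" and k: "k < N" and j: "j < N"
  shows "(wA N + wB N * K * wC N r S) $$ (k,j) =
     (if k = j then real k else 0) + (\<Sum>m<r. K $$ (0,m) * (if j \<in> S m then 1 else 0))"
proof -
  have B: "wB N \<in> carrier_mat N 1" and C: "wC N r S \<in> carrier_mat r N" and A: "wA N \<in> carrier_mat N N"
    by (auto simp: wB_def wC_def wA_def)
  have X: "wB N * K * wC N r S \<in> carrier_mat N N" using B K C by auto
  have e: "(wB N * K * wC N r S) $$ (k,j) = (\<Sum>m<r. K $$ (0,m) * (if j \<in> S m then 1 else 0))"
    unfolding BKC_entry[OF B K C k j] using k j by (simp add: wB_def wC_def)
  have "(wA N + wB N * K * wC N r S) $$ (k,j) = wA N $$ (k,j) + (wB N * K * wC N r S) $$ (k,j)"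
    using A X k j by (simp del: index_mult_mat assoc_mult_mat)
  then show ?thesis unfolding e using k j by (simp add: wA_def)
qed

lemma sfm_hard:
  assumes Kb: "Kb \<in> carrier_mat 1 r"
    and cov: "\<forall>u<N. \<exists>j<r. Kb $$ (0,j) \<and> u \<in> S j"
  shows "no_SFM (red_A N) (red_B N) (red_C N r S) Kb"
  unfolding no_SFM_def
proof (intro exI conjI)
  show "realizes (red_A N) (wA N)" unfolding realizes_def red_A_def wA_def by auto
  show "realizes (red_B N) (wB N)" unfolding realizes_def red_B_def wB_def by auto
  show "realizes (red_C N r S) (wC N r S)" unfolding realizes_def red_C_def wC_def by auto
  have dimM: "wA N + wB N * K * wC N r S \<in> carrier_mat N N" if "K \<in> carrier_mat 1 r" for K
    using that by (auto simp: wA_def wB_def wC_def)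
  show "(\<Inter>K\<in>pattern_set Kb. spec (wA N + wB N * K * wC N r S)) = {}"
  proof (rule ccontr)
    assume "\<not> ?thesis"
    then obtain l where l: "\<And>K. K \<in> pattern_set Kb \<Longrightarrow> l \<in> spec (wA N + wB N * K * wC N r S)"
      by blast
    define K0 :: "real mat" where "K0 = 0\<^sub>m 1 r"
    define K2 :: "real mat" where "K2 = mat 1 r (\<lambda>(i,j). if Kb $$ (0,j) then 1 else 0)"
    have K0: "K0 \<in> carrier_mat 1 r" "K0 \<in> pattern_set Kb"
      using Kb unfolding K0_def pattern_set_def realizes_def by auto
    have K2: "K2 \<in> carrier_mat 1 r" "K2 \<in> pattern_set Kb"
      using Kb unfolding K2_def pattern_set_def realizes_def by auto
    obtain v where v: "v \<in> carrier_vec N" "\<exists>u<N. v $ u \<noteq> 0"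
      "\<forall>k<N. (\<Sum>j<N. complex_of_real ((wA N + wB N * K0 * wC N r S) $$ (k,j)) * v $ j) = l * v $ k"
      using spec_eq[OF dimM[OF K0(1)] l[OF K0(2)]] by blast
    obtain u where u: "u < N" "v $ u \<noteq> 0" using v(2) by blast
    have "(\<Sum>j<N. complex_of_real ((wA N + wB N * K0 * wC N r S) $$ (u,j)) * v $ j)
        = (\<Sum>j<N. (if u = j then complex_of_real (real u) * v $ j else 0))"
      by (rule sum.cong) (use u K0 in \<open>auto simp: wM_entry K0_def\<close>)
    also have "\<dots> = complex_of_real (real u) * v $ u" using u by simp
    finally have "complex_of_real (real u) * v $ u = l * v $ u" using v(3) u by simp
    then have lu: "l = of_nat u" using u(2) by simp
    define c where "c j = (\<Sum>m<r. K2 $$ (0,m) * (if j \<in> S m then 1 else 0 :: real))" for j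
    obtain w where w: "w \<in> carrier_vec N" "\<exists>u<N. w $ u \<noteq> 0"
      "\<forall>k<N. (\<Sum>j<N. complex_of_real ((wA N + wB N * K2 * wC N r S) $$ (k,j)) * w $ j) = l * w $ k"
      using spec_eq[OF dimM[OF K2(1)] l[OF K2(2)]] by blast
    define s where "s = (\<Sum>j<N. complex_of_real (c j) * w $ j)"
    have eq: "of_nat k * w $ k + s = l * w $ k" if k: "k < N" for k
    proof -
      have "(\<Sum>j<N. complex_of_real ((wA N + wB N * K2 * wC N r S) $$ (k,j)) * w $ j)
          = (\<Sum>j<N. (if k = j then of_nat k * w $ j else 0) + complex_of_real (c j) * w $ j)"
        by (rule sum.cong) (use k K2 in \<open>auto simp: wM_entry c_def algebra_simps\<close>)
      also have "\<dots> = of_nat k * w $ k + s" unfolding s_def sum.distrib using k by simp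
      finally show ?thesis using w(3) k by simp
    qed
    have s0: "s = 0" using eq[OF u(1)] lu by simp
    have wk: "w $ k = 0" if "k < N" "k \<noteq> u" for k
      using eq[OF that(1)] s0 lu that by simp
    have wu: "w $ u \<noteq> 0" using w(2) wk by blast
    have "s = complex_of_real (c u) * w $ u"
      unfolding s_def using u wk by (subst sum.remove[of _ u]) auto
    moreover have "c u > 0"
    proof -
      obtain j where j: "j < r" "Kb $$ (0,j)" "u \<in> S j" using cov u by blast
      have "c u \<ge> K2 $$ (0,j) * (if u \<in> S j then 1 else 0)"
        unfolding c_def
        by (rule member_le_sum) (auto simp: K2_def j)
      then show ?thesis using j by (simp add: K2_def)
    qed
    ultimately show False using s0 wu by simp
  qed
qed

lemma no_SFM_iff:
  assumes "Kb \<in> carrier_mat 1 r"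
  shows "no_SFM (red_A N) (red_B N) (red_C N r S) Kb \<longleftrightarrow> (\<forall>u<N. \<exists>j<r. Kb $$ (0,j) \<and> u \<in> S j)"
  using sfm_easy[OF assms] sfm_hard[OF assms] by blast

theorem lemma3:
  fixes N r \<alpha> :: nat and S :: "nat \<Rightarrow> nat set" and Kb :: "bool mat"
  assumes "\<forall>i<r. S i \<subseteq> {0..<N}"
    and "(\<Union>i<r. S i) = {0..<N}"
    and "\<alpha> \<ge> 1"
    and "Kb \<in> carrier_mat 1 r"
  shows "Kb \<in> K_gamma (red_A N) (red_B N) (red_C N r S) (\<alpha> - 1)
     \<longleftrightarrow> multi_covers N r S \<alpha> Kb"
proof -
  have dB: "dim_col (red_B N) = 1" and dC: "dim_row (red_C N r S) = r"
    by (auto simp: red_B_def red_C_def)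
  have ze: "zero_entries Kb I \<in> carrier_mat 1 r" for I
    using assms(4) by (auto simp: zero_entries_def)
  have zeE: "zero_entries Kb I $$ (0,j) = (Kb $$ (0,j) \<and> (0,j) \<notin> I)" if "j < r" for I j
    using assms(4) that by (auto simp: zero_entries_def)
  define T where "T u = {j. j < r \<and> Kb $$ (0,j) \<and> u \<in> S j}" for u
  have Kg: "Kb \<in> K_gamma (red_A N) (red_B N) (red_C N r S) (\<alpha> - 1) \<longleftrightarrow>
     (\<forall>I::(nat\<times>nat) set. I \<subseteq> {0} \<times> {0..<r} \<and> card I \<le> \<alpha> - 1 \<longrightarrow>
        (\<forall>u<N. \<exists>j<r. Kb $$ (0,j) \<and> (0,j) \<notin> I \<and> u \<in> S j))"
  proof -
    have "no_SFM (red_A N) (red_B N) (red_C N r S) (zero_entries Kb I) \<longleftrightarrow>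
        (\<forall>u<N. \<exists>j<r. Kb $$ (0,j) \<and> (0,j) \<notin> I \<and> u \<in> S j)" for I
      unfolding no_SFM_iff[OF ze] using zeE by (metis (no_types, lifting))
    then show ?thesis unfolding K_gamma_def dB dC mem_Collect_eq using assms(4) by simp
  qed
  show ?thesis
  proof
    assume "Kb \<in> K_gamma (red_A N) (red_B N) (red_C N r S) (\<alpha> - 1)"
    then have H: "\<And>I::(nat\<times>nat) set. I \<subseteq> {0} \<times> {0..<r} \<Longrightarrow> card I \<le> \<alpha> - 1 \<Longrightarrow>
        (\<forall>u<N. \<exists>j<r. Kb $$ (0,j) \<and> (0,j) \<notin> I \<and> u \<in> S j)" using Kg by blast
    show "multi_covers N r S \<alpha> Kb" unfolding multi_covers_def
    proof (intro allI impI, rule ccontr)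
      fix u assume u: "u < N" and lt: "\<not> \<alpha> \<le> card {j. j < r \<and> Kb $$ (0,j) \<and> u \<in> S j}"
      define I where "I = (\<lambda>j. (0::nat,j)) ` T u"
      have "card I \<le> card (T u)" unfolding I_def by (rule card_image_le) (simp add: T_def)
      then have "card I \<le> \<alpha> - 1" using lt unfolding T_def by simp
      moreover have "I \<subseteq> {0} \<times> {0..<r}" unfolding I_def T_def by auto
      ultimately obtain j where "j < r" "Kb $$ (0,j)" "(0,j) \<notin> I" "u \<in> S j"
        using H u by blast
      then show False unfolding I_def T_def by auto
    qed
  next
    assume mc: "multi_covers N r S \<alpha> Kb"
    show "Kb \<in> K_gamma (red_A N) (red_B N) (red_C N r S) (\<alpha> - 1)"
      unfolding Kg
    proof (intro allI impI, elim conjE)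
      fix I u assume I: "I \<subseteq> {0} \<times> {0..<r}" "card I \<le> \<alpha> - 1" and u: "u < N"
      have fI: "finite I" using I(1) finite_subset by blast
      show "\<exists>j<r. Kb $$ (0,j) \<and> (0,j) \<notin> I \<and> u \<in> S j"
      proof (rule ccontr)
        assume "\<not> ?thesis"
        then have "T u \<subseteq> snd ` I" unfolding T_def by force
        then have "card (T u) \<le> card (snd ` I)" using fI by (intro card_mono) auto
        also have "\<dots> \<le> card I" using fI by (rule card_image_le)
        finally have "card (T u) \<le> \<alpha> - 1" using I(2) by simp
        moreover have "card (T u) \<ge> \<alpha>" using mc u unfolding multi_covers_def T_def by blast
        ultimately show False using assms(3) by simp
      qed
    qed
  qed
qed

end
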